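(* Let $K$ be a field of characteristic $0$ and let $m=x_1^{\alpha_1}\cdots x_n^{\alpha_n}$ with $\alpha_i\ge1$ for all $i$. Then the Lie algebra $\mathfrak{g}_m$ is the space of diagonal matrices $\mathrm{diag}(\lambda_1,\ldots,\lambda_n)$ such that $\sum_{i=1}^n\alpha_i\lambda_i=0$.
   Context: For $P\in K[x_1,\ldots,x_n]$, the Lie algebra $\mathfrak{g}_P$ of $P$ is the Lie algebra (tangent space at the identity) of the group of invariants $\{A\in GL_n(K): P(A.x)=P(x)\}$; equivalently, $\mathfrak{g}_P$ is the linear subspace of matrices $A=(a_{ij})\in M_n(K)$ such that $\sum_{i,j\in[n]} a_{ij}\,x_j\,\frac{\partial P}{\partial x_i}=0$. *)

theory Defs
  imports "HOL-Analysis.Analysis" "HOL-Library.Poly_Mapping"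
begin

text \<open>Multivariate polynomials over a coefficient ring 'a in variables indexed by the
  finite type 'n: finitely supported maps from exponent vectors (finitely supported 'n to nat) to
  coefficients; multiplication is the convolution product of Poly_Mapping.\<close>

type_synonym ('n, 'a) mpoly = "('n \<Rightarrow>\<^sub>0 nat) \<Rightarrow>\<^sub>0 'a"

definition mp_const :: "'a::zero \<Rightarrow> ('n, 'a) mpoly" where
  "mp_const c = Poly_Mapping.single 0 c"

definition mp_var :: "'n \<Rightarrow> ('n, 'a::{zero,one}) mpoly" where
  "mp_var j = Poly_Mapping.single (Poly_Mapping.single j 1) 1"

definition mp_monom :: "('n \<Rightarrow>\<^sub>0 nat) \<Rightarrow> ('n, 'a::{zero,one}) mpoly" where
  "mp_monom alpha = Poly_Mapping.single alpha 1"

definition mp_pderiv :: "'n \<Rightarrow> ('n, 'a::semiring_1) mpoly \<Rightarrow> ('n, 'a) mpoly" where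
  "mp_pderiv i p = (\<Sum>\<beta>\<in>Poly_Mapping.keys p.
      Poly_Mapping.single (\<beta> - Poly_Mapping.single i 1)
        (of_nat (Poly_Mapping.lookup \<beta> i) * Poly_Mapping.lookup p \<beta>))"

definition lie_alg :: "('n::finite, 'a::comm_ring_1) mpoly \<Rightarrow> ('a ^ 'n ^ 'n) set" where
  "lie_alg P = {A. (\<Sum>i\<in>UNIV. \<Sum>j\<in>UNIV.
      mp_const (A $ i $ j) * mp_var j * mp_pderiv i P) = 0}"

end

theory Submission
  imports Defs
begin

lemma pderiv_monom:
  "mp_pderiv i (mp_monom alpha :: ('n, 'a::semiring_1) mpoly) =
     Poly_Mapping.single (alpha - Poly_Mapping.single i 1) (of_nat (Poly_Mapping.lookup alpha i))"
  unfolding mp_pderiv_def mp_monom_def by simp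

lemma summand_eq:
  "mp_const c * mp_var j * mp_pderiv i (mp_monom alpha :: ('n, 'a::comm_ring_1) mpoly) =
   Poly_Mapping.single (Poly_Mapping.single j 1 + (alpha - Poly_Mapping.single i 1))
     (c * of_nat (Poly_Mapping.lookup alpha i))"
  unfolding pderiv_monom mp_const_def mp_var_def by (simp add: mult_single)

lemma shift_diag:
  fixes alpha :: "'n \<Rightarrow>\<^sub>0 nat"
  assumes "\<forall>i. Poly_Mapping.lookup alpha i \<ge> 1"
  shows "Poly_Mapping.single i 1 + (alpha - Poly_Mapping.single i 1) = alpha"
proof (rule poly_mapping_eqI)
  fix x show "Poly_Mapping.lookup (Poly_Mapping.single i 1 + (alpha - Poly_Mapping.single i 1)) x = Poly_Mapping.lookup alpha x"
    using assms[rule_format, of x]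
    by (simp add: lookup_add lookup_minus lookup_single when_def)
qed

lemma shift_eq:
  fixes alpha :: "'n \<Rightarrow>\<^sub>0 nat"
  assumes "\<forall>i. Poly_Mapping.lookup alpha i \<ge> 1"
  shows "(Poly_Mapping.single j 1 + (alpha - Poly_Mapping.single i 1) =
          Poly_Mapping.single l 1 + (alpha - Poly_Mapping.single k 1))
       \<longleftrightarrow> (i = k \<and> j = l) \<or> (i = j \<and> k = l)" (is "?L = ?R")
proof
  assume L: ?L
  have h: "\<And>x. (1 when j = x) + (Poly_Mapping.lookup alpha x - (1 when i = x)) =
       (1 when l = x) + (Poly_Mapping.lookup alpha x - (1 when k = x))"
    using arg_cong[OF L, of "\<lambda>p. Poly_Mapping.lookup p x" for x]
    by (simp add: lookup_add lookup_minus lookup_single)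
  show ?R
  proof (rule ccontr)
    assume nR: "\<not> ?R"
    show False
    proof (cases "i = j")
      case True
      then have "k \<noteq> l" using nR by auto
      have "(1 when l = l) + (Poly_Mapping.lookup alpha l - (1 when k = l)) =
            (1 when j = l) + (Poly_Mapping.lookup alpha l - (1 when i = l))" using h[of l] by simp
      then show False using True \<open>k \<noteq> l\<close> assms[rule_format, of l]
        by (cases "i = l") (auto simp: when_def)
    next
      case False
      have hj: "(1 when j = j) + (Poly_Mapping.lookup alpha j - (1 when i = j)) =
            (1 when l = j) + (Poly_Mapping.lookup alpha j - (1 when k = j))" using h[of j] by simp
      have hi: "(1 when j = i) + (Poly_Mapping.lookup alpha i - (1 when i = i)) =
            (1 when l = i) + (Poly_Mapping.lookup alpha i - (1 when k = i))" using h[of i] by simp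
      from hj False have "l = j \<or> (l \<noteq> j \<and> k \<noteq> j \<and> False)" using assms[rule_format, of j]
        by (auto simp: when_def split: if_splits)
      then have "l = j" by blast
      with hi False have "k = i" using assms[rule_format, of i]
        by (auto simp: when_def split: if_splits)
      then show False using nR \<open>l = j\<close> by auto
    qed
  qed
next
  assume ?R then show ?L using shift_diag[OF assms] by auto
qed

theorem proposition4:
  fixes alpha :: "'n::finite \<Rightarrow>\<^sub>0 nat"
  assumes "\<forall>i. Poly_Mapping.lookup alpha i \<ge> 1"
  shows "lie_alg (mp_monom alpha :: ('n, 'a::field_char_0) mpoly) =
    {A. (\<forall>i j. i \<noteq> j \<longrightarrow> A $ i $ j = 0) \<and>
        (\<Sum>i\<in>UNIV. of_nat (Poly_Mapping.lookup alpha i) * A $ i $ i) = 0}"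
proof -
  define sh where "sh i j = Poly_Mapping.single j 1 + (alpha - Poly_Mapping.single i 1)" for i j :: 'n
  have sheq: "sh i j = sh k l \<longleftrightarrow> (i = k \<and> j = l) \<or> (i = j \<and> k = l)" for i j k l
    unfolding sh_def by (rule shift_eq[OF assms])
  have shd: "sh i i = alpha" for i
  proof -
    have "Poly_Mapping.lookup (sh i i) x = Poly_Mapping.lookup alpha x" for x
      using assms[rule_format, of x]
      by (simp add: sh_def lookup_add lookup_minus lookup_single when_def)
    then show ?thesis by (rule poly_mapping_eqI)
  qed
  have look: "Poly_Mapping.lookup (\<Sum>i\<in>UNIV. \<Sum>j\<in>UNIV.
      mp_const (A $ i $ j) * mp_var j * mp_pderiv i (mp_monom alpha :: ('n, 'a) mpoly)) (sh k l)
     = (\<Sum>i\<in>UNIV. \<Sum>j\<in>UNIV. if sh i j = sh k l then A $ i $ j * of_nat (Poly_Mapping.lookup alpha i) else 0)"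
    for A :: "'a ^ 'n ^ 'n" and k l
    by (simp add: summand_eq lookup_sum lookup_single when_def sh_def)
  show ?thesis
  proof (intro set_eqI iffI)
    fix A :: "'a ^ 'n ^ 'n"
    assume "A \<in> lie_alg (mp_monom alpha)"
    then have Z: "(\<Sum>i\<in>UNIV. \<Sum>j\<in>UNIV.
      mp_const (A $ i $ j) * mp_var j * mp_pderiv i (mp_monom alpha :: ('n, 'a) mpoly)) = 0"
      by (simp add: lie_alg_def)
    have off: "A $ k $ l = 0" if "k \<noteq> l" for k l
    proof -
      have "0 = (\<Sum>i\<in>UNIV. \<Sum>j\<in>UNIV. if sh i j = sh k l then A $ i $ j * of_nat (Poly_Mapping.lookup alpha i) else (0::'a))"
        using look[of A k l] Z by simp
      also have "\<dots> = (\<Sum>i\<in>UNIV. if i = k then A $ k $ l * of_nat (Poly_Mapping.lookup alpha k) else 0)"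
        by (rule sum.cong) (use that in \<open>auto simp: sheq if_distrib cong: if_cong\<close>)
      also have "\<dots> = A $ k $ l * of_nat (Poly_Mapping.lookup alpha k)" by simp
      finally have "A $ k $ l * of_nat (Poly_Mapping.lookup alpha k) = 0" by simp
      moreover have "(of_nat (Poly_Mapping.lookup alpha k) :: 'a) \<noteq> 0" using assms[rule_format, of k] by simp
      ultimately show ?thesis by simp
    qed
    obtain k :: 'n where True by simp
    have "0 = (\<Sum>i\<in>UNIV. \<Sum>j\<in>UNIV. if sh i j = sh k k then A $ i $ j * of_nat (Poly_Mapping.lookup alpha i) else (0::'a))"
      using look[of A k k] Z by simp
    also have "\<dots> = (\<Sum>i\<in>UNIV. A $ i $ i * of_nat (Poly_Mapping.lookup alpha i))"
    proof (rule sum.cong[OF refl])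
      fix i
      have "(\<Sum>j\<in>UNIV. if sh i j = sh k k then A $ i $ j * of_nat (Poly_Mapping.lookup alpha i) else (0::'a))
          = (\<Sum>j\<in>UNIV. if i = j then A $ i $ j * of_nat (Poly_Mapping.lookup alpha i) else 0)"
        by (rule sum.cong[OF refl]) (auto simp: sheq)
      then show "(\<Sum>j\<in>UNIV. if sh i j = sh k k then A $ i $ j * of_nat (Poly_Mapping.lookup alpha i) else (0::'a))
          = A $ i $ i * of_nat (Poly_Mapping.lookup alpha i)" by simp
    qed
    finally have "(\<Sum>i\<in>UNIV. of_nat (Poly_Mapping.lookup alpha i) * A $ i $ i) = 0"
      by (simp add: mult.commute)
    with off show "A \<in> {A. (\<forall>i j. i \<noteq> j \<longrightarrow> A $ i $ j = 0) \<and>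
        (\<Sum>i\<in>UNIV. of_nat (Poly_Mapping.lookup alpha i) * A $ i $ i) = 0}" by auto
  next
    fix A :: "'a ^ 'n ^ 'n"
    assume "A \<in> {A. (\<forall>i j. i \<noteq> j \<longrightarrow> A $ i $ j = 0) \<and>
        (\<Sum>i\<in>UNIV. of_nat (Poly_Mapping.lookup alpha i) * A $ i $ i) = 0}"
    then have off: "\<And>i j. i \<noteq> j \<Longrightarrow> A $ i $ j = 0"
      and d: "(\<Sum>i\<in>UNIV. of_nat (Poly_Mapping.lookup alpha i) * A $ i $ i) = (0::'a)" by auto
    have "(\<Sum>i\<in>UNIV. \<Sum>j\<in>UNIV.
      mp_const (A $ i $ j) * mp_var j * mp_pderiv i (mp_monom alpha :: ('n, 'a) mpoly))
      = (\<Sum>i\<in>UNIV. Poly_Mapping.single alpha (A $ i $ i * of_nat (Poly_Mapping.lookup alpha i)))"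
    proof (rule sum.cong[OF refl])
      fix i
      have "(\<Sum>j\<in>UNIV. mp_const (A $ i $ j) * mp_var j * mp_pderiv i (mp_monom alpha :: ('n, 'a) mpoly))
          = (\<Sum>j\<in>UNIV. if j = i then Poly_Mapping.single alpha (A $ i $ i * of_nat (Poly_Mapping.lookup alpha i)) else 0)"
        by (rule sum.cong[OF refl]) (auto simp: summand_eq shift_diag[OF assms, simplified] off)
      then show "(\<Sum>j\<in>UNIV. mp_const (A $ i $ j) * mp_var j * mp_pderiv i (mp_monom alpha :: ('n, 'a) mpoly))
          = Poly_Mapping.single alpha (A $ i $ i * of_nat (Poly_Mapping.lookup alpha i))" by simp
    qed
    also have "\<dots> = Poly_Mapping.single alpha (\<Sum>i\<in>UNIV. A $ i $ i * of_nat (Poly_Mapping.lookup alpha i))"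
      by (rule poly_mapping_eqI) (simp add: lookup_sum lookup_single when_def)
    also have "\<dots> = 0" using d by (simp add: mult.commute)
    finally show "A \<in> lie_alg (mp_monom alpha)" by (simp add: lie_alg_def)
  qed
qed

end
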